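(* Let $n\ge6$ and $m\ge2$. The unique set family of shape $(m^n)$ and type $(m+n-4,\ m+2,\ m+2,\ (m-1)^{n-6},\ (m-2)^3)$ is $\{1,2,\dots,m-2,m+1,m+2\}^{\preceq}\cup\{1,2,\dots,m-2,m-1,m+n-4\}^{\preceq}$. This type is not of the form $(m^n)\star\nu$ for any partition $\nu$ of $n-1$ with at most $m$ parts.
   Context: Majorization: for $m$-subsets $X=\{x_1<\dots<x_m\}$, $Y=\{y_1<\dots<y_m\}$ of $\mathbf{N}$, $X\preceq Y$ if $x_i\le y_i$ for all $i$. For an $m$-subset $A$, the downset $A^{\preceq}$ is the set of all $m$-subsets $X$ of $\mathbf{N}$ with $X\preceq A$. A set family of shape $(m^n)$ is a collection of $n$ distinct $m$-subsets of $\mathbf{N}$; it has type $\lambda$ (largest part $a$, conjugate $\lambda'$) if for each $i\in\{1,\dots,a\}$ exactly $\lambda'_i$ of its sets contain $i$. In the partition above, exponents denote repeated parts, and parts equal to $0$ (when $m=2$) are omitted. For a partition $\nu$ of $n-1$ with $k\le m$ parts, $(m^n)\star\nu$ is the partition obtained from the Young diagram of $(m^n)$ by, for each $1\le i\le k$, deleting $\nu_i$ boxes (from the bottom) of column $m+1-i$ and adding $\nu_i$ boxes to row $i$. *)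

theory Defs
  imports Main "HOL-Library.Multiset"
begin

text \<open>Here \<open>\<nat>\<close> is the set of positive integers: an m-subset is a finite set of
  positive naturals with exactly m elements.\<close>
definition msubset :: "nat \<Rightarrow> nat set \<Rightarrow> bool" where
  "msubset m X \<longleftrightarrow> finite X \<and> card X = m \<and> 0 \<notin> X"

definition majorized :: "nat set \<Rightarrow> nat set \<Rightarrow> bool" where
  "majorized X Y \<longleftrightarrow> finite X \<and> finite Y \<and> card X = card Y \<and>
     (\<forall>i < card X. sorted_list_of_set X ! i \<le> sorted_list_of_set Y ! i)"

definition downset :: "nat \<Rightarrow> nat set \<Rightarrow> nat set set" where
  "downset m A = {X. msubset m X \<and> majorized X A}"

definition family_of_shape :: "nat \<Rightarrow> nat \<Rightarrow> nat set set \<Rightarrow> bool" where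
  "family_of_shape m n F \<longleftrightarrow> finite F \<and> card F = n \<and> (\<forall>S\<in>F. msubset m S)"

definition is_partition :: "nat list \<Rightarrow> bool" where
  "is_partition lam \<longleftrightarrow> sorted_wrt (\<ge>) lam \<and> (\<forall>p\<in>set lam. 0 < p)"

definition conj_part :: "nat list \<Rightarrow> nat \<Rightarrow> nat" where
  "conj_part lam i = length (filter (\<lambda>p. i \<le> p) lam)"

definition largest_part :: "nat list \<Rightarrow> nat" where
  "largest_part lam = (if lam = [] then 0 else Max (set lam))"

definition has_type :: "nat set set \<Rightarrow> nat list \<Rightarrow> bool" where
  "has_type F lam \<longleftrightarrow> (\<forall>i\<in>{1..largest_part lam}. card {S\<in>F. i \<in> S} = conj_part lam i)"

text \<open>(m^n) \<star> nu, as the list of row lengths of rows 1..n (rows may become 0).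
  Row r loses one box in column m+1-i iff r is among the bottom nu_i rows,
  i.e. r > n - nu_i; row i (i \<le> k) gains nu_i boxes.\<close>
definition star :: "nat \<Rightarrow> nat \<Rightarrow> nat list \<Rightarrow> nat list" where
  "star m n nu = map (\<lambda>r. m - card {i\<in>{1..length nu}. n - nu ! (i - 1) < r}
                        + (if r \<le> length nu then nu ! (r - 1) else 0)) [1..<n+1]"

definition same_partition :: "nat list \<Rightarrow> nat list \<Rightarrow> bool" where
  "same_partition a b \<longleftrightarrow> mset (filter (\<lambda>p. 0 < p) a) = mset (filter (\<lambda>p. 0 < p) b)"

definition the_type :: "nat \<Rightarrow> nat \<Rightarrow> nat list" where
  "the_type m n = filter (\<lambda>p. 0 < p)
     ([m + n - 4, m + 2, m + 2] @ replicate (n - 6) (m - 1) @ replicate 3 (m - 2))"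

end

theory Submission
  imports Defs
begin


lemma sl_B: assumes "m \<ge> 2" "m - 2 < x" "x < y"
  shows "sorted_list_of_set ({1..m-2} \<union> {x,y}) = [1..<m-1] @ [x,y]"
proof -
  have "sorted_wrt (<) ([1..<m-1] @ [x,y])" using assms
    by (auto simp: sorted_wrt_append)
  moreover have "set ([1..<m-1] @ [x,y]) = {1..m-2} \<union> {x,y}" using assms by auto
  ultimately show ?thesis
    by (metis sorted_list_of_set.finite_set_strict_sorted strict_sorted_equal finite_set
        sorted_list_of_set.strict_sorted_key_list_of_set set_sorted_list_of_set List.finite_set)
qed

lemma nthB: assumes "m \<ge> (2::nat)"
  shows "([1..<m-1] @ [a,b]) ! (m-2) = a" "([1..<m-1] @ [a,b]) ! (m-1) = b"
proof -
  obtain k where k: "m = k + 2" using assms le_Suc_ex by (metis add.commute)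
  show "([1..<m-1] @ [a,b]) ! (m-2) = a" "([1..<m-1] @ [a,b]) ! (m-1) = b"
    unfolding k by (simp_all add: nth_append)
qed

lemma strict_ge: assumes "sorted_wrt (<) s" "\<forall>v\<in>set s. (v::nat) \<ge> 1" "i < length s"
  shows "s ! i \<ge> i + 1"
  using assms(3)
proof (induction i)
  case 0 then show ?case using assms(2) by (simp add: Suc_le_eq)
next
  case (Suc i)
  have "s ! i < s ! Suc i" using assms(1) Suc.prems by (simp add: sorted_wrt_iff_nth_less)
  then show ?case using Suc by simp
qed

lemma L: assumes "m \<ge> 2" "m - 2 < p" "p < q"
  shows "X \<in> downset m ({1..m-2} \<union> {p,q}) \<longleftrightarrow>
    (\<exists>x y. X = {1..m-2} \<union> {x,y} \<and> m-2 < x \<and> x < y \<and> x \<le> p \<and> y \<le> q)"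
proof
  assume "X \<in> downset m ({1..m-2} \<union> {p,q})"
  hence ms: "msubset m X" and mj: "majorized X ({1..m-2} \<union> {p,q})" by (auto simp: downset_def)
  define s where "s = sorted_list_of_set X"
  have fin: "finite X" and cX: "card X = m" and z: "0 \<notin> X" using ms by (auto simp: msubset_def)
  have ss: "sorted_wrt (<) s" unfolding s_def by simp
  have ls: "length s = m" using cX fin unfolding s_def by simp
  have sX: "set s = X" using fin unfolding s_def by simp
  have pos: "\<forall>v\<in>set s. v \<ge> 1" using z sX by (auto simp: Suc_le_eq) (metis gr0I)
  have slA: "sorted_list_of_set ({1..m-2} \<union> {p,q}) = [1..<m-1] @ [p,q]" using sl_B assms by blast
  have mj2: "\<forall>i<m. s ! i \<le> ([1..<m-1] @ [p,q]) ! i" using mj cX unfolding majorized_def s_def slA by simp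
  have low: "s ! i = i + 1" if "i < m - 2" for i
  proof -
    have "s ! i \<le> ([1..<m-1] @ [p,q]) ! i" using mj2 that by simp
    also have "\<dots> = i + 1" using that by (simp add: nth_append numeral_2_eq_2)
    finally show ?thesis using strict_ge[OF ss pos, of i] that ls by simp
  qed
  define x where "x = s ! (m-2)"
  define y where "y = s ! (m-1)"
  have xp: "x \<le> p" using mj2[rule_format, of "m-2"] nthB(1)[OF assms(1), of p q] assms unfolding x_def by simp
  have yq: "y \<le> q" using mj2[rule_format, of "m-1"] nthB(2)[OF assms(1), of p q] assms unfolding y_def
    by simp
  have xy: "x < y" using ss ls assms unfolding x_def y_def by (simp add: sorted_wrt_iff_nth_less)
  have xg: "m - 2 < x" using strict_ge[OF ss pos, of "m-2"] ls assms unfolding x_def by simp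
  have "s = [1..<m-1] @ [x,y]"
  proof (rule nth_equalityI)
    show "length s = length ([1..<m-1] @ [x,y])" using ls assms by simp
    fix i assume "i < length s"
    then consider "i < m - 2" | "i = m - 2" | "i = m - 1" using ls by linarith
    then show "s ! i = ([1..<m-1] @ [x,y]) ! i"
    proof cases
      case 1 then show ?thesis using low by (simp add: nth_append numeral_2_eq_2)
    next
      case 2 then show ?thesis using nthB(1)[OF assms(1), of x y] x_def by metis
    next
      case 3 then show ?thesis using nthB(2)[OF assms(1), of x y] y_def by metis
    qed
  qed
  then have "X = {1..m-2} \<union> {x,y}" using sX assms by auto
  then show "\<exists>x y. X = {1..m-2} \<union> {x,y} \<and> m-2 < x \<and> x < y \<and> x \<le> p \<and> y \<le> q"
    using xp yq xy xg by blast
next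
  assume "\<exists>x y. X = {1..m-2} \<union> {x,y} \<and> m-2 < x \<and> x < y \<and> x \<le> p \<and> y \<le> q"
  then obtain x y where X: "X = {1..m-2} \<union> {x,y}" "m-2 < x" "x < y" "x \<le> p" "y \<le> q" by blast
  have s1: "sorted_list_of_set X = [1..<m-1] @ [x,y]" using sl_B assms X by blast
  have s2: "sorted_list_of_set ({1..m-2} \<union> {p,q}) = [1..<m-1] @ [p,q]" using sl_B assms by blast
  have cX: "card X = m" using X assms by (simp add: card_insert_if)
  have cA: "card ({1..m-2} \<union> {p,q}) = m" using assms by (simp add: card_insert_if)
  show "X \<in> downset m ({1..m-2} \<union> {p,q})"
    unfolding downset_def msubset_def majorized_def
    using X cX cA s1 s2 assms by (auto simp: nth_append nth_Cons')
qed


lemma conj_the: assumes "n \<ge> 6" "m \<ge> 2" "i \<ge> 1"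
  shows "conj_part (the_type m n) i = (if i \<le> m-2 then n else if i = m-1 then n-3
     else if i \<le> m+2 then 3 else if i \<le> m+n-4 then 1 else 0)"
proof -
  have e: "(\<lambda>p. i \<le> p \<and> 0 < p) = (\<lambda>p. i \<le> p)" using assms by auto
  show ?thesis unfolding conj_part_def the_type_def filter_filter e using assms
    by (auto simp: filter_replicate)
qed

lemma largest_the: assumes "n \<ge> 6" "m \<ge> 2"
  shows "largest_part (the_type m n) = m + n - 4"
proof -
  have "m + n - 4 \<in> set (the_type m n)" using assms by (simp add: the_type_def)
  moreover have "\<forall>p\<in>set (the_type m n). p \<le> m + n - 4" using assms by (auto simp: the_type_def)
  ultimately show ?thesis unfolding largest_part_def
    by (auto intro!: Max_eqI)
qed

lemma sum_ge: assumes "\<forall>p\<in>set xs. (0::nat) < p" "j < length xs"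
  shows "sum_list xs \<ge> xs ! j + (length xs - 1)"
proof -
  have "sum_list xs = (\<Sum>i\<in>{..<length xs}. xs ! i)" by (simp add: sum_list_sum_nth atLeast0LessThan)
  also have "\<dots> = xs ! j + (\<Sum>i\<in>{..<length xs} - {j}. xs ! i)"
    using assms(2) by (simp add: sum.remove)
  finally have a: "sum_list xs = xs ! j + (\<Sum>i\<in>{..<length xs} - {j}. xs ! i)" .
  have "(\<Sum>i\<in>{..<length xs} - {j}. xs ! i) \<ge> (\<Sum>i\<in>{..<length xs} - {j}. 1)"
    using assms by (intro sum_mono) (auto simp: Suc_le_eq)
  then show ?thesis using assms(2) a by simp
qed

lemma star_not: assumes "n \<ge> 6" "m \<ge> 2" "is_partition nu" "sum_list nu = n - 1"
  shows "\<not> same_partition (the_type m n) (star m n nu)"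
proof
  assume sp: "same_partition (the_type m n) (star m n nu)"
  define k where "k = length nu"
  have pos: "\<forall>p\<in>set nu. 0 < p" using assms(3) by (simp add: is_partition_def)
  have kn: "k \<le> n" 
  proof (cases "k = 0")
    case False
    then have "nu ! 0 > 0" using pos k_def by simp
    then show ?thesis using False sum_ge[OF pos, of 0] assms(4) unfolding k_def by simp
  qed simp
  have bnd: "nu ! j \<le> n - k" if "j < k" for j
    using sum_ge[OF pos, of j] that assms(4) unfolding k_def by simp
  define f where "f = (\<lambda>r. m - card {i\<in>{1..length nu}. n - nu ! (i - 1) < r}
                        + (if r \<le> length nu then nu ! (r - 1) else 0))"
  have st: "star m n nu = map f [1..<n+1]" unfolding star_def f_def ..
  have f1: "f r = m + nu ! (r - 1)" if "1 \<le> r" "r \<le> k" for r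
  proof -
    have "{i\<in>{1..length nu}. n - nu ! (i - 1) < r} = {}"
    proof -
      { fix i assume "i \<in> {1..k}" "n - nu ! (i - 1) < r"
        then have "nu ! (i-1) \<le> n - k" using bnd[of "i-1"] by auto
        then have False using \<open>n - nu ! (i - 1) < r\<close> that kn by linarith }
      then show ?thesis unfolding k_def by blast
    qed
    then have c: "card {i\<in>{1..length nu}. n - nu ! (i - 1) < r} = 0" by simp
    show ?thesis unfolding f_def c using that k_def by simp
  qed
  have f2: "f r \<le> m" if "k < r" for r unfolding f_def using that k_def by simp
  have up: "[1..<n+1] = [1..<k+1] @ [k+1..<n+1]" using kn
    using upt_add_eq_append[of 1 "k+1" "n - k"] by simp
  have "filter (\<lambda>p. m < p) (star m n nu) = map f [1..<k+1]"
  proof -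
    have a: "filter (\<lambda>p. m < p) (map f [1..<k+1]) = map f [1..<k+1]"
    proof (rule filter_True)
      show "\<forall>x\<in>set (map f [1..<k+1]). m < x"
      proof
        fix x assume "x \<in> set (map f [1..<k+1])"
        then obtain r where r: "1 \<le> r" "r \<le> k" "x = f r" by auto
        have "nu ! (r-1) \<in> set nu" using r k_def by simp
        then show "m < x" using r f1 pos by fastforce
      qed
    qed
    have b: "filter (\<lambda>p. m < p) (map f [k+1..<n+1]) = []"
      by (rule filter_False) (auto simp: not_less intro!: f2)
    show ?thesis unfolding st up map_append filter_append a b by simp
  qed
  also have "\<dots> = map (\<lambda>x. m + x) nu"
  proof (rule nth_equalityI)
    show "length (map f [1..<k+1]) = length (map (\<lambda>x. m + x) nu)" by (simp add: k_def del: upt_Suc)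
    fix i assume "i < length (map f [1..<k+1])"
    then have "i < k" by (simp del: upt_Suc)
    then show "map f [1..<k+1] ! i = map (\<lambda>x. m + x) nu ! i"
      using f1[of "i+1"] k_def by (simp del: upt_Suc)
  qed
  finally have A: "filter (\<lambda>p. m < p) (star m n nu) = map (\<lambda>x. m + x) nu" .
  have B: "filter (\<lambda>p. m < p) (the_type m n) = [m+n-4, m+2, m+2]"
    using assms by (auto simp: the_type_def filter_replicate)
  have e: "(\<lambda>x. 0 < x \<and> m < x) = (\<lambda>p. m < p)" by auto
  have "mset (filter (\<lambda>p. m < p) (filter (\<lambda>p. 0 < p) (the_type m n))) =
        mset (filter (\<lambda>p. m < p) (filter (\<lambda>p. 0 < p) (star m n nu)))"
    using sp unfolding same_partition_def by (metis mset_filter)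
  then have "mset [m+n-4, m+2, m+2] = mset (map (\<lambda>x. m + x) nu)"
    unfolding filter_filter e A B .
  then have "sum_list [m+n-4, m+2, m+2] = sum_list (map (\<lambda>x. m + x) nu)"
    and "length [m+n-4, m+2, m+2] = length (map (\<lambda>x. m + x) nu)"
    by (metis sum_mset_sum_list, metis size_mset)
  moreover have "sum_list (map (\<lambda>x. m + x) nu) = length nu * m + sum_list nu"
    by (simp add: sum_list_addf sum_list_triv)
  ultimately have S: "m+n-4+(m+2)+(m+2) = length nu * m + (n - 1)" and L3: "length nu = 3"
    using assms(4) by simp_all
  show False using S unfolding L3 using assms(1) by simp
qed


lemma dc: assumes "finite F" "finite (R::nat set)"
  shows "(\<Sum>S\<in>F. card (S \<inter> R)) = (\<Sum>i\<in>R. card {S\<in>F. i \<in> S})"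
proof -
  have "(\<Sum>S\<in>F. card (S \<inter> R)) = (\<Sum>S\<in>F. \<Sum>i\<in>R. if i \<in> S then 1 else 0)"
  proof (rule sum.cong)
    fix S assume "S \<in> F"
    have "card (S \<inter> R) = card (R \<inter> S)" by (simp add: Int_commute)
    also have "\<dots> = (\<Sum>i\<in>R \<inter> S. 1)" by simp
    also have "\<dots> = (\<Sum>i\<in>R. if i \<in> S then 1 else 0)" using assms(2) by (rule sum.inter_restrict)
    finally show "card (S \<inter> R) = (\<Sum>i\<in>R. if i \<in> S then 1 else 0)" .
  qed simp
  also have "\<dots> = (\<Sum>i\<in>R. \<Sum>S\<in>F. if i \<in> S then 1 else 0)" by (rule sum.swap)
  also have "\<dots> = (\<Sum>i\<in>R. card {S\<in>F. i \<in> S})"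
  proof (rule sum.cong)
    fix i assume "i \<in> R"
    have "card {S\<in>F. i \<in> S} = (\<Sum>S\<in>{S\<in>F. i \<in> S}. 1)" by simp
    also have "\<dots> = (\<Sum>S\<in>F. if i \<in> S then 1 else 0)" using assms(1) by (rule sum.inter_filter)
    finally show "(\<Sum>S\<in>F. if i \<in> S then 1 else 0) = card {S\<in>F. i \<in> S}" by simp
  qed simp
  finally show ?thesis .
qed

lemma two_sub: assumes "E \<subseteq> {x, x+1, x+2::nat}" "card E = 2"
  shows "E = {x,x+1} \<or> E = {x,x+2} \<or> E = {x+1,x+2}"
proof -
  have fE: "finite E" using assms(1) finite_subset by blast
  have "card ({x,x+1,x+2} - E) = 1"
    using assms fE by (simp add: card_Diff_subset)
  then obtain z where z: "{x,x+1,x+2} - E = {z}" by (rule card_1_singletonE)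
  have Ez: "E = {x,x+1,x+2} - {z}" using z assms(1) by blast
  have "z \<in> {x,x+1,x+2}" using z by blast
  then have "z = x \<or> z = x+1 \<or> z = x+2" by simp
  then show ?thesis
  proof (elim disjE)
    assume "z = x" then have "E = {x+1,x+2}" using Ez by auto
    then show ?thesis by blast
  next
    assume "z = x+1" then have "E = {x,x+2}" using Ez by auto
    then show ?thesis by blast
  next
    assume "z = x+2" then have "E = {x,x+1}" using Ez by auto
    then show ?thesis by blast
  qed
qed

context fixes m n :: nat assumes n6: "n \<ge> 6" and m2: "m \<ge> 2"
begin

definition "Bs = {1..m-2}"
definition "img = (\<lambda>w. Bs \<union> {m-1,w}) ` {m..m+n-4}"
definition "T3 = {Bs \<union> {m,m+1}, Bs \<union> {m,m+2}, Bs \<union> {m+1,m+2}}"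
definition "U = img \<union> T3"

lemma memB: "i \<in> Bs \<longleftrightarrow> 1 \<le> i \<and> i \<le> m - 2" by (simp add: Bs_def)
lemma finB: "finite Bs" by (simp add: Bs_def)
lemma cardB: "card Bs = m - 2" by (simp add: Bs_def)

lemma cardBxy: assumes "m-2 < x" "m-2 < y" "x \<noteq> y" shows "card (Bs \<union> {x,y}) = m"
proof -
  have "card (Bs \<union> {x,y}) = card Bs + card {x,y}"
    by (rule card_Un_disjoint) (use assms in \<open>auto simp: finB memB\<close>)
  then show ?thesis using assms m2 cardB by simp
qed

lemma U_eq: "downset m ({1..m-2} \<union> {m+1, m+2}) \<union> downset m ({1..m-1} \<union> {m+n-4}) = U"
proof -
  have e2: "{1..m-1} \<union> {m+n-4} = {1..m-2} \<union> {m-1, m+n-4}" using m2 by auto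
  have D1: "X \<in> downset m ({1..m-2} \<union> {m+1, m+2}) \<longleftrightarrow>
    (\<exists>x y. X = Bs \<union> {x,y} \<and> m-2 < x \<and> x < y \<and> x \<le> m+1 \<and> y \<le> m+2)" for X
    using L[of m "m+1" "m+2" X] m2 unfolding Bs_def by simp
  have D2: "X \<in> downset m ({1..m-1} \<union> {m+n-4}) \<longleftrightarrow>
    (\<exists>x y. X = Bs \<union> {x,y} \<and> m-2 < x \<and> x < y \<and> x \<le> m-1 \<and> y \<le> m+n-4)" for X
    using L[of m "m-1" "m+n-4" X] m2 n6 unfolding Bs_def e2 by simp
  show ?thesis
  proof (rule set_eqI)
    fix X
    show "X \<in> downset m ({1..m-2} \<union> {m+1, m+2}) \<union> downset m ({1..m-1} \<union> {m+n-4}) \<longleftrightarrow> X \<in> U"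
    proof
      assume "X \<in> downset m ({1..m-2} \<union> {m+1, m+2}) \<union> downset m ({1..m-1} \<union> {m+n-4})"
      then obtain x y where X: "X = Bs \<union> {x,y}" "m-2 < x" "x < y"
        and c: "(x \<le> m+1 \<and> y \<le> m+2) \<or> (x \<le> m-1 \<and> y \<le> m+n-4)"
        unfolding Un_iff D1 D2 by blast
      have "x = m - 1 \<or> x = m \<or> x = m + 1" using X(2) c m2 n6 by (elim disjE conjE) linarith+
      then show "X \<in> U"
      proof (elim disjE)
        assume "x = m - 1"
        then have "y \<in> {m..m+n-4}" using X(3) c m2 n6 by (elim disjE conjE) auto
        then show ?thesis unfolding U_def img_def using X \<open>x = m-1\<close> by blast
      next
        assume "x = m"
        then have "y = m+1 \<or> y = m+2" using X(3) c m2 n6 by (elim disjE conjE) auto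
        then show ?thesis unfolding U_def T3_def using X \<open>x = m\<close> by blast
      next
        assume "x = m+1"
        then have "y = m+2" using X(3) c m2 n6 by (elim disjE conjE) auto
        then show ?thesis unfolding U_def T3_def using X \<open>x = m+1\<close> by blast
      qed
    next
      assume "X \<in> U"
      then consider (a) w where "w \<in> {m..m+n-4}" "X = Bs \<union> {m-1,w}" | (b) "X \<in> T3"
        unfolding U_def img_def by blast
      then show "X \<in> downset m ({1..m-2} \<union> {m+1, m+2}) \<union> downset m ({1..m-1} \<union> {m+n-4})"
      proof cases
        case a
        have "m - 2 < m - 1" "m - 1 < w" "w \<le> m+n-4" using a m2 by auto
        then have "\<exists>x y. X = Bs \<union> {x,y} \<and> m-2 < x \<and> x < y \<and> x \<le> m-1 \<and> y \<le> m+n-4"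
          using a(2) by blast
        then show ?thesis unfolding Un_iff D2 by blast
      next
        case b
        then have "X = Bs \<union> {m,m+1} \<or> X = Bs \<union> {m,m+2} \<or> X = Bs \<union> {m+1,m+2}"
          unfolding T3_def by blast
        have "\<exists>x y. X = Bs \<union> {x,y} \<and> m-2 < x \<and> x < y \<and> x \<le> m+1 \<and> y \<le> m+2"
        proof -
          { assume "X = Bs \<union> {m,m+1}" then have ?thesis using m2 by (intro exI[of _ m] exI[of _ "m+1"]) simp }
          moreover
          { assume "X = Bs \<union> {m,m+2}" then have ?thesis using m2 by (intro exI[of _ m] exI[of _ "m+2"]) simp }
          moreover
          { assume "X = Bs \<union> {m+1,m+2}" then have ?thesis using m2 by (intro exI[of _ "m+1"] exI[of _ "m+2"]) simp }
          ultimately show ?thesis using \<open>X = Bs \<union> {m,m+1} \<or> X = Bs \<union> {m,m+2} \<or> X = Bs \<union> {m+1,m+2}\<close> by blast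
        qed
        then show ?thesis unfolding Un_iff D1 by blast
      qed
    qed
  qed
qed


lemma memBxy: "i \<in> Bs \<union> {x,y} \<longleftrightarrow> (1 \<le> i \<and> i \<le> m - 2) \<or> i = x \<or> i = y"
  by (auto simp: memB)

lemma eqBs: assumes "m-2 < x" "m-2 < y" "m-2 < x'" "m-2 < y'"
  shows "Bs \<union> {x,y} = Bs \<union> {x',y'} \<longleftrightarrow> {x,y} = {x',y'}"
proof
  assume h: "Bs \<union> {x,y} = Bs \<union> {x',y'}"
  have "{x,y} = (Bs \<union> {x,y}) - Bs" using assms by (auto simp: memB)
  also have "\<dots> = (Bs \<union> {x',y'}) - Bs" using h by simp
  also have "\<dots> = {x',y'}" using assms by (auto simp: memB)
  finally show "{x,y} = {x',y'}" .
qed simp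

lemma filt3: "{S \<in> {A,B,C}. P S} = (if P A then {A} else {}) \<union> (if P B then {B} else {}) \<union> (if P C then {C} else {})"
  by auto

lemma card_img: "card img = n - 3"
proof -
  have "inj_on (\<lambda>w. Bs \<union> {m-1,w}) {m..m+n-4}"
  proof (rule inj_onI)
    fix w w' assume w: "w \<in> {m..m+n-4}" "w' \<in> {m..m+n-4}" and e: "Bs \<union> {m-1,w} = Bs \<union> {m-1,w'}"
    have "{m-1,w} = {m-1,w'}" using e w m2 by (subst (asm) eqBs) auto
    then show "w = w'" using w m2 by (auto simp: doubleton_eq_iff)
  qed
  then have "card img = card {m..m+n-4}" unfolding img_def by (rule card_image)
  then show ?thesis using n6 m2 by simp
qed

lemma finite_img: "finite img" unfolding img_def by simp

lemma T3_distinct: "Bs \<union> {m,m+1} \<noteq> Bs \<union> {m,m+2}" "Bs \<union> {m,m+1} \<noteq> Bs \<union> {m+1,m+2}"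
   "Bs \<union> {m,m+2} \<noteq> Bs \<union> {m+1,m+2}"
  by (subst eqBs; use m2 in \<open>auto simp: doubleton_eq_iff\<close>)+

lemma card_T3: "card T3 = 3"
  unfolding T3_def using T3_distinct by simp

lemma img_T3: "img \<inter> T3 = {}"
proof -
  have "m - 1 \<in> S" if "S \<in> img" for S using that unfolding img_def by auto
  moreover have "m - 1 \<notin> S" if "S \<in> T3" for S using that m2 unfolding T3_def by (auto simp: memB)
  ultimately show ?thesis by blast
qed

lemma card_U: "card U = n"
  unfolding U_def using card_img card_T3 img_T3 finite_img n6
  by (subst card_Un_disjoint) (auto simp: T3_def)

lemma U_msubset: "S \<in> U \<Longrightarrow> msubset m S"
proof -
  assume "S \<in> U"
  then obtain x y where S: "S = Bs \<union> {x,y}" "m-2 < x" "m-2<y" "x \<noteq> y"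
    unfolding U_def img_def T3_def using m2 by auto
  then show ?thesis unfolding msubset_def using cardBxy[OF S(2-4)] by (simp add: finB memB)
qed

lemma img_filt: assumes "i \<in> {m..m+n-4}" shows "{S\<in>img. i \<in> S} = {Bs \<union> {m-1,i}}"
  using assms m2 unfolding img_def by (auto simp: memB)

lemma count_U: assumes "i \<in> {1..m+n-4}"
  shows "card {S\<in>U. i \<in> S} = (if i \<le> m-2 then n else if i = m-1 then n-3
     else if i \<le> m+2 then 3 else if i \<le> m+n-4 then 1 else 0)"
proof -
  have split: "{S\<in>U. i \<in> S} = {S\<in>img. i \<in> S} \<union> {S\<in>T3. i \<in> S}" unfolding U_def by auto
  have cs: "card {S\<in>U. i \<in> S} = card {S\<in>img. i \<in> S} + card {S\<in>T3. i \<in> S}"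
    unfolding split by (rule card_Un_disjoint) (use finite_img img_T3 in \<open>auto simp: T3_def\<close>)
  consider "i \<le> m - 2" | "i = m - 1" | "i = m" | "i = m+1" | "i = m+2" | "m+2 < i" using assms by linarith
  then show ?thesis
  proof cases
    case 1
    then have "{S\<in>U. i \<in> S} = U" using assms m2 unfolding U_def img_def T3_def by (auto simp: memB)
    then show ?thesis using card_U 1 by simp
  next
    case 2
    have a: "{S\<in>img. i \<in> S} = img" using 2 unfolding img_def by auto
    have b: "{S\<in>T3. i \<in> S} = {}" using 2 m2 unfolding T3_def by (auto simp: memB)
    show ?thesis unfolding cs a b using card_img 2 m2 by (simp, arith)
  next
    case 3
    have a: "card {S\<in>img. i \<in> S} = 1" using img_filt[of i] 3 n6 by simp
    have b: "{S\<in>T3. i \<in> S} = {Bs \<union> {m,m+1}, Bs \<union> {m,m+2}}" using 3 m2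
      unfolding T3_def filt3 by (auto simp: memB)
    have r: "(if i \<le> m-2 then n else if i = m-1 then n-3
     else if i \<le> m+2 then 3 else if i \<le> m+n-4 then 1 else 0) = 3" using 3 m2 by auto
    show ?thesis unfolding cs a b r using T3_distinct by simp
  next
    case 4
    have a: "card {S\<in>img. i \<in> S} = 1" using img_filt[of i] 4 n6 by simp
    have b: "{S\<in>T3. i \<in> S} = {Bs \<union> {m,m+1}, Bs \<union> {m+1,m+2}}" using 4 m2
      unfolding T3_def filt3 by (auto simp: memB)
    have r: "(if i \<le> m-2 then n else if i = m-1 then n-3
     else if i \<le> m+2 then 3 else if i \<le> m+n-4 then 1 else 0) = 3" using 4 m2 by auto
    show ?thesis unfolding cs a b r using T3_distinct by simp
  next
    case 5
    have a: "card {S\<in>img. i \<in> S} = 1" using img_filt[of i] 5 n6 by simp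
    have b: "{S\<in>T3. i \<in> S} = {Bs \<union> {m,m+2}, Bs \<union> {m+1,m+2}}" using 5 m2
      unfolding T3_def filt3 by (auto simp: memB)
    have r: "(if i \<le> m-2 then n else if i = m-1 then n-3
     else if i \<le> m+2 then 3 else if i \<le> m+n-4 then 1 else 0) = 3" using 5 m2 by auto
    show ?thesis unfolding cs a b r using T3_distinct by simp
  next
    case 6
    have a: "card {S\<in>img. i \<in> S} = 1" using img_filt[of i] 6 assms by simp
    have b: "{S\<in>T3. i \<in> S} = {}" using 6 m2
      unfolding T3_def filt3 by (simp add: memB)
    have r: "(if i \<le> m-2 then n else if i = m-1 then n-3
     else if i \<le> m+2 then 3 else if i \<le> m+n-4 then 1 else 0) = 1" using 6 m2 assms by auto
    show ?thesis unfolding cs a b r by simp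
  qed
qed

lemma backward: "family_of_shape m n U \<and> has_type U (the_type m n)"
proof
  show "family_of_shape m n U" unfolding family_of_shape_def
    using card_U U_msubset finite_img by (auto simp: U_def T3_def)
  show "has_type U (the_type m n)" unfolding has_type_def largest_the[OF n6 m2]
  proof
    fix i assume i: "i \<in> {1..m+n-4}"
    then show "card {S\<in>U. i \<in> S} = conj_part (the_type m n) i"
      using count_U[OF i] conj_the[OF n6 m2, of i] by simp
  qed
qed


lemma mm: "\<not> (m - Suc 0 \<le> m - 2)" "\<not> (m - 1 \<le> m - 2)" using m2 by linarith+

lemma sum_c: "(\<Sum>i\<in>{1..m+n-4}. (if i \<le> m-2 then n else if i = m-1 then n-3
     else if i \<le> m+2 then 3 else if i \<le> m+n-4 then 1 else (0::nat))) = m * n"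
  (is "(\<Sum>i\<in>_. ?c i) = _")
proof -
  have s1: "{1..m+n-4} = {1..m-2} \<union> ({m-1} \<union> ({m,m+1,m+2} \<union> {m+3..m+n-4}))"
    using m2 n6 by auto
  have "(\<Sum>i\<in>{1..m+n-4}. ?c i) = (\<Sum>i\<in>{1..m-2}. ?c i) + (?c (m-1) + ((\<Sum>i\<in>{m,m+1,m+2}. ?c i) + (\<Sum>i\<in>{m+3..m+n-4}. ?c i)))"
    unfolding s1 using m2
    by (subst sum.union_disjoint, simp, simp, force)+ simp
  also have "(\<Sum>i\<in>{1..m-2}. ?c i) = (\<Sum>i\<in>{1..m-2}. n)" by (rule sum.cong) auto
  also have "(\<Sum>i\<in>{m+3..m+n-4}. ?c i) = (\<Sum>i\<in>{m+3..m+n-4}. 1)" by (rule sum.cong) auto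
  also have "(\<Sum>i\<in>{m,m+1,m+2}. ?c i) = 9" using m2 n6 by auto
  also have "?c (m-1) = n - 3" using m2 by (simp add: mm)
  finally have "(\<Sum>i\<in>{1..m+n-4}. ?c i) = (m-2)*n + (n-3 + (9 + (n-6)))" using n6 by simp
  also have "\<dots> = m * n"
  proof -
    obtain k where k: "m = k + 2" using m2 by (metis add.commute le_Suc_ex)
    show ?thesis unfolding k using n6 by (simp add: algebra_simps)
  qed
  finally show ?thesis .
qed

lemma forward: assumes fam: "family_of_shape m n F" and ty: "has_type F (the_type m n)"
  shows "F = U"
proof -
  define c where "c = (\<lambda>i. if i \<le> m-2 then n else if i = m-1 then n-3
     else if i \<le> m+2 then 3 else if i \<le> m+n-4 then 1 else (0::nat))"
  have finF: "finite F" and cF: "card F = n" and ms: "\<And>S. S \<in> F \<Longrightarrow> msubset m S"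
    using fam unfolding family_of_shape_def by auto
  have finS: "finite S" "card S = m" "0 \<notin> S" if "S \<in> F" for S
    using ms[OF that] unfolding msubset_def by auto
  have cnt: "card {S\<in>F. i \<in> S} = c i" if "i \<in> {1..m+n-4}" for i
    using ty that conj_the[OF n6 m2, of i] unfolding has_type_def largest_the[OF n6 m2] c_def by auto
  have BS: "Bs \<subseteq> S" if S: "S \<in> F" for S
  proof
    fix i assume i: "i \<in> Bs"
    then have "i \<in> {1..m+n-4}" "i \<le> m - 2" using memB n6 by auto
    then have "card {S\<in>F. i \<in> S} = card F" using cnt cF unfolding c_def by simp
    then have "{S\<in>F. i \<in> S} = F" using finF by (intro card_subset_eq) auto
    then show "i \<in> S" using S by blast
  qed
  have SR: "S \<subseteq> {1..m+n-4}" if S: "S \<in> F" for S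
  proof -
    let ?R = "{1..m+n-4}"
    have "(\<Sum>S\<in>F. card (S \<inter> ?R)) = (\<Sum>i\<in>?R. card {S\<in>F. i \<in> S})" using finF by (intro dc) auto
    also have "\<dots> = (\<Sum>i\<in>?R. c i)" by (rule sum.cong) (auto simp: cnt)
    also have "\<dots> = m * n" unfolding c_def by (rule sum_c)
    also have "\<dots> = (\<Sum>S\<in>F. card S)" using finS cF by simp
    finally have eq: "(\<Sum>S\<in>F. card (S \<inter> ?R)) = (\<Sum>S\<in>F. card S)" .
    have "card (S \<inter> ?R) = card S"
      by (rule sum_mono_inv[OF eq _ S finF]) (auto intro: card_mono finS)
    then have "S \<inter> ?R = S" using finS(1)[OF S] by (intro card_subset_eq) auto
    then show ?thesis by blast
  qed
  define F0 where "F0 = {S\<in>F. m - 1 \<in> S}"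
  have m1R: "m - 1 \<in> {1..m+n-4}" using m2 n6 by auto
  have cF0: "card F0 = n - 3" unfolding F0_def using cnt[OF m1R] unfolding c_def by (simp add: mm)
  have F0img: "F0 \<subseteq> img"
  proof
    fix S assume S0: "S \<in> F0"
    then have S: "S \<in> F" "m - 1 \<in> S" unfolding F0_def by auto
    define E where "E = S - Bs"
    have cE: "card E = 2" unfolding E_def using BS[OF S(1)] finS[OF S(1)] cardB finB m2
      by (simp add: card_Diff_subset)
    have m1E: "m - 1 \<in> E" unfolding E_def using S m2 by (auto simp: memB)
    have fE: "finite E" unfolding E_def using finS[OF S(1)] by simp
    have "card (E - {m-1}) = 1" using cE m1E fE by simp
    then obtain w where w: "E - {m-1} = {w}" by (rule card_1_singletonE)
    have w1: "w \<in> S" "w \<notin> Bs" "w \<noteq> m - 1" using w unfolding E_def by auto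
    then have "w \<in> {1..m+n-4}" "\<not> (1 \<le> w \<and> w \<le> m - 2)" using SR[OF S(1)] memB by blast+
    then have wS: "w \<in> {m..m+n-4}" using w1(3) by auto
    have "E = {m-1, w}" using w m1E by blast
    then have "S = Bs \<union> {m-1, w}" using BS[OF S(1)] unfolding E_def by blast
    then show "S \<in> img" using wS unfolding img_def by blast
  qed
  have F0eq: "F0 = img" using F0img cF0 card_img finite_img by (intro card_subset_eq) auto
  have imgF: "img \<subseteq> F" using F0eq unfolding F0_def by blast
  define R where "R = F - img"
  have cR: "card R = 3" unfolding R_def using imgF card_img cF finite_img n6 by (simp add: card_Diff_subset)
  have RT3: "R \<subseteq> T3"
  proof
    fix S assume SR0: "S \<in> R"
    then have S: "S \<in> F" "S \<notin> img" unfolding R_def by auto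
    have nm1: "m - 1 \<notin> S" using S F0eq unfolding F0_def by blast
    have nleaf: "w \<notin> S" if w: "w \<in> {m+3..m+n-4}" for w
    proof
      assume wS: "w \<in> S"
      have "card {S\<in>F. w \<in> S} = 1" using cnt[of w] w m2 unfolding c_def by auto
      then obtain X where X: "{S\<in>F. w \<in> S} = {X}" by (rule card_1_singletonE)
      have "Bs \<union> {m-1,w} \<in> img" using w unfolding img_def by auto
      then have "Bs \<union> {m-1,w} \<in> {S\<in>F. w \<in> S}" using imgF by auto
      moreover have "S \<in> {S\<in>F. w \<in> S}" using S wS by auto
      ultimately have "S = Bs \<union> {m-1,w}" using X by auto
      then show False using S(2) \<open>Bs \<union> {m-1,w} \<in> img\<close> by simp
    qed
    define E where "E = S - Bs"
    have cE: "card E = 2" unfolding E_def using BS[OF S(1)] finS[OF S(1)] cardB finB m2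
      by (simp add: card_Diff_subset)
    have Esub: "E \<subseteq> {m, m+1, m+2}"
    proof
      fix x assume "x \<in> E"
      then have "x \<in> S" "x \<notin> Bs" unfolding E_def by auto
      then have "x \<in> {1..m+n-4}" "x \<noteq> m - 1" "x \<notin> {m+3..m+n-4}" "\<not> (1 \<le> x \<and> x \<le> m - 2)"
        using SR[OF S(1)] nm1 nleaf memB by blast+
      then show "x \<in> {m, m+1, m+2}" by auto
    qed
    have "E = {m,m+1} \<or> E = {m,m+2} \<or> E = {m+1,m+2}"
      using two_sub[of E m] Esub cE by (simp add: add.assoc)
    moreover have "S = Bs \<union> E" using BS[OF S(1)] unfolding E_def by blast
    ultimately show "S \<in> T3" unfolding T3_def by auto
  qed
  have "R = T3" using RT3 cR card_T3 by (intro card_subset_eq) (auto simp: T3_def)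
  then show "F = U" unfolding U_def using imgF unfolding R_def by blast
qed

end

theorem lemma5p6:
  fixes m n :: nat
  assumes "n \<ge> 6" and "m \<ge> 2"
  shows "(\<forall>F. (family_of_shape m n F \<and> has_type F (the_type m n)) \<longleftrightarrow>
            F = downset m ({1..m-2} \<union> {m+1, m+2}) \<union> downset m ({1..m-1} \<union> {m+n-4}))
         \<and> \<not> (\<exists>nu. is_partition nu \<and> sum_list nu = n - 1 \<and> length nu \<le> m \<and>
                  same_partition (the_type m n) (star m n nu))"
proof (intro conjI allI)
  fix F
  show "(family_of_shape m n F \<and> has_type F (the_type m n)) \<longleftrightarrow>
            F = downset m ({1..m-2} \<union> {m+1, m+2}) \<union> downset m ({1..m-1} \<union> {m+n-4})"
    unfolding U_eq[OF assms] using forward[OF assms] backward[OF assms] by blast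
  show "\<not> (\<exists>nu. is_partition nu \<and> sum_list nu = n - 1 \<and> length nu \<le> m \<and>
                  same_partition (the_type m n) (star m n nu))"
    using star_not[OF assms] by blast
qed

end
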